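(* Let $p\in\mathbb{N}$, $0\le\lambda\le1$. Let $f$ be analytic in $\mathrm{U}=\{|z|<1\}$ of the form $f(z)=z^p+\sum_{k=p+1}^\infty a_kz^k$, put $\mathcal{F}_\lambda(z)=(1-\lambda)f(z)+\lambda zf'(z)$, and assume $\mathcal{F}_\lambda(z)\mathcal{F}_\lambda'(z)\neq0$ for all $z\in\mathrm{U}\setminus\{0\}$. Let $c=1+\lambda(p-1)$, $\delta\in[0,c)$, and $$\rho_1=\begin{cases} p-\dfrac{\delta}{2(c-\delta)}, & \delta\in[0,c/2],\\[2mm] p-\dfrac{c-\delta}{2\delta}, & \delta\in[c/2,c).\end{cases}$$ If $$\operatorname{Re}\frac{zf'(z)+\lambda z^2f''(z)}{(1-\lambda)f(z)+\lambda zf'(z)}>\rho_1,\quad z\in\mathrm{U},$$ then $\operatorname{Re}\dfrac{\mathcal{F}_\lambda(z)}{z^p}>\delta$ for all $z\in\mathrm{U}$.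
   Context: The quotient in the hypothesis equals $z\mathcal{F}_\lambda'(z)/\mathcal{F}_\lambda(z)$; the paper phrases the hypothesis as $f\in\mathcal{T}_\lambda(p;\rho_1)$ and the conclusion as $f\in\mathcal{N}^\lambda_{p,1}(1,0;\delta)$, which amount to the displayed inequalities. *)

theory Defs
  imports "HOL-Analysis.Analysis"
begin

definition Flam :: "real \<Rightarrow> (complex \<Rightarrow> complex) \<Rightarrow> complex \<Rightarrow> complex" where
  "Flam lam f z = (1 - of_real lam) * f z + of_real lam * z * deriv f z"

definition rho1 :: "nat \<Rightarrow> real \<Rightarrow> real \<Rightarrow> real" where
  "rho1 p lam \<delta> = (let c = 1 + lam * (real p - 1) in
     if \<delta> \<le> c / 2 then real p - \<delta> / (2 * (c - \<delta>)) else real p - (c - \<delta>) / (2 * \<delta>))"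

end

theory Submission
  imports Defs "HOL-Complex_Analysis.Complex_Analysis"
begin



lemma norm_w_sq:
  fixes a :: complex and \<beta> :: real
  shows "(norm (a + of_real (1 - 2*\<beta>)))^2 - (norm (a - 1))^2 = 4 * (Re a - \<beta>) * (1 - \<beta>)"
proof -
  have 1: "(norm (a - 1))^2 = (Re a - 1)^2 + (Im a)^2" by (simp add: cmod_power2)
  have 2: "(norm (a + of_real (1 - 2*\<beta>)))^2 = (Re a + (1 - 2*\<beta>))^2 + (Im a)^2" by (simp add: cmod_power2)
  show ?thesis unfolding 1 2 by (simp add: power2_eq_square algebra_simps)
qed

lemma norm_w_le:
  fixes a :: complex and \<beta> :: real
  assumes "\<beta> < 1" "Re a \<ge> \<beta>"
  shows "norm (a - 1) \<le> norm (a + of_real (1 - 2*\<beta>))"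
proof -
  have "(norm (a - 1))^2 \<le> (norm (a + of_real (1 - 2*\<beta>)))^2"
  proof -
    have h: "0 \<le> 4*(Re a - \<beta>)*(1-\<beta>)" using assms by simp
    then show ?thesis using norm_w_sq[of a \<beta>] by linarith
  qed
  thus ?thesis by (rule power2_le_imp_le) simp
qed

lemma norm_w_less:
  fixes a :: complex and \<beta> :: real
  assumes "\<beta> < 1" "Re a > \<beta>"
  shows "norm (a - 1) < norm (a + of_real (1 - 2*\<beta>))"
proof -
  have "(norm (a - 1))^2 < (norm (a + of_real (1 - 2*\<beta>)))^2"
  proof -
    have h: "0 < 4*(Re a - \<beta>)*(1-\<beta>)" using assms by simp
    then show ?thesis using norm_w_sq[of a \<beta>] by linarith
  qed
  thus ?thesis by (rule power2_less_imp_less) simp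
qed

lemma norm_w_eq:
  fixes a :: complex and \<beta> :: real
  assumes "\<beta> < 1" "Re a = \<beta>"
  shows "norm (a - 1) = norm (a + of_real (1 - 2*\<beta>))"
proof -
  have "(norm (a - 1))^2 = (norm (a + of_real (1 - 2*\<beta>)))^2"
    using norm_w_sq[of a \<beta>] assms by simp
  thus ?thesis by (simp add: power2_eq_imp_eq)
qed

lemma jack:
  fixes q :: "complex \<Rightarrow> complex" and \<beta> :: real and z1 :: complex
  assumes hol: "q holomorphic_on ball 0 1" and q0: "q 0 = 1" and b0: "0 \<le> \<beta>" and b1: "\<beta> < 1"
    and z1: "norm z1 < 1" "Re (q z1) \<le> \<beta>"
  shows "\<exists>z0. norm z0 < 1 \<and> z0 \<noteq> 0 \<and> Re (q z0) = \<beta> \<and>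
           (\<exists>k\<ge>1. z0 * deriv q z0 = of_real k * (q z0 - 1) * (q z0 + of_real (1 - 2*\<beta>)) / of_real (2*(1-\<beta>)))"
proof -
  have contq: "continuous_on (ball 0 1) q" using hol holomorphic_on_imp_continuous_on by blast
  define r1 where "r1 = norm z1"
  have r1: "r1 < 1" using z1 r1_def by simp
  have sub1: "cball 0 r1 \<subseteq> ball (0::complex) 1" using r1 by (auto simp: dist_norm)
  define K where "K = cball 0 r1 \<inter> (\<lambda>z. Re (q z)) -` {..\<beta>}"
  have "continuous_on (cball 0 r1) (\<lambda>z. Re (q z))"
    by (intro continuous_intros continuous_on_subset[OF contq sub1])
  hence "closed K" unfolding K_def by (intro continuous_closed_preimage) auto
  hence "compact K" unfolding compact_eq_bounded_closed
    by (auto intro: bounded_subset[OF bounded_cball] simp: K_def)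
  have "z1 \<in> K" by (auto simp: K_def r1_def z1)
  obtain z0 where z0K: "z0 \<in> K" and z0min: "\<forall>y\<in>K. norm z0 \<le> norm y"
    using continuous_attains_inf[OF \<open>compact K\<close>, of norm] \<open>z1\<in>K\<close> continuous_on_norm_id by blast
  define r0 where "r0 = norm z0"
  have z0le: "norm z0 \<le> r1" "Re (q z0) \<le> \<beta>" using z0K K_def by auto
  have inside: "\<beta> < Re (q y)" if "norm y < r0" for y
  proof (rule ccontr)
    assume "\<not> ?thesis"
    then have "y \<in> K" using that z0le by (auto simp: K_def r0_def)
    then show False using z0min that r0_def by force
  qed
  have "z0 \<noteq> 0" proof assume "z0 = 0" then show False using z0le q0 b1 by simp qed
  hence r0pos: "r0 > 0" by (simp add: r0_def)
  have sub0: "cball 0 r0 \<subseteq> ball (0::complex) 1" using z0le r1 r0_def by (auto simp: dist_norm)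
  define T where "T = cball 0 r0 \<inter> (\<lambda>z. Re (q z)) -` {\<beta>..}"
  have "continuous_on (cball 0 r0) (\<lambda>z. Re (q z))"
    by (intro continuous_intros continuous_on_subset[OF contq sub0])
  hence "closed T" unfolding T_def by (intro continuous_closed_preimage) auto
  have "ball 0 r0 \<subseteq> T" using inside by (auto simp: T_def less_imp_le dist_norm)
  hence "closure (ball 0 r0) \<subseteq> T" using closure_minimal \<open>closed T\<close> by blast
  hence ge: "\<beta> \<le> Re (q y)" if "norm y \<le> r0" for y using r0pos that by (auto simp: T_def closure_ball)
  have Req0: "Re (q z0) = \<beta>" using ge[of z0] z0le r0_def by simp
  define c' where "c' = complex_of_real (1 - 2*\<beta>)"
  define w where "w z = (q z - 1) / (q z + c')" for z
  have den: "q z + c' \<noteq> 0" if "norm z \<le> r0" for z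
  proof -
    have "Re (q z + c') \<ge> 1 - \<beta>" using ge[OF that] by (simp add: c'_def)
    thus ?thesis using b1 by force
  qed
  define U where "U = ball 0 1 \<inter> (\<lambda>z. q z + c') -` (-{0})"
  have "open U" unfolding U_def by (intro continuous_open_preimage continuous_intros contq) auto
  have subU: "cball 0 r0 \<subseteq> U" using sub0 den by (auto simp: U_def)
  have holw: "w holomorphic_on U" unfolding w_def U_def
    by (intro holomorphic_intros holomorphic_on_subset[OF hol]) auto
  have wlt: "norm (w y) < 1" if "norm y < r0" for y
  proof -
    have "norm (q y - 1) < norm (q y + c')" unfolding c'_def using norm_w_less[OF b1 inside[OF that]] .
    thus ?thesis using den[of y] that by (simp add: w_def norm_divide)
  qed
  have wle: "norm (w y) \<le> 1" if "norm y \<le> r0" for y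
  proof -
    have "norm (q y - 1) \<le> norm (q y + c')" unfolding c'_def using norm_w_le[OF b1 ge[OF that]] .
    thus ?thesis using den[of y] that by (simp add: w_def norm_divide divide_le_eq_1)
  qed
  define W where "W = w z0"
  have nW: "norm W = 1"
  proof -
    have "norm (q z0 - 1) = norm (q z0 + c')" unfolding c'_def using norm_w_eq[OF b1 Req0] .
    thus ?thesis using den[of z0] r0_def by (simp add: W_def w_def norm_divide)
  qed
  have WW: "cnj W * W = 1"
  proof -
    have "W * cnj W = 1" using complex_norm_square[of W] nW by simp
    thus ?thesis by (simp add: mult.commute)
  qed
  have w0: "w 0 = 0" by (simp add: w_def q0)
  have radial: "norm (w (of_real t * z0)) \<le> t" if "0 \<le> t" "t < 1" for t
  proof -
    define h where "h = w \<circ> (\<lambda>z. of_real r0 * z)"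
    have "(\<lambda>z. of_real r0 * z) ` ball 0 1 \<subseteq> U"
    proof
      fix x assume "x \<in> (\<lambda>z. complex_of_real r0 * z) ` ball 0 1"
      then obtain z where "norm z < 1" "x = of_real r0 * z" by auto
      hence "norm x \<le> r0" using r0pos by (simp add: norm_mult mult_left_le)
      thus "x \<in> U" using subU by auto
    qed
    hence holh: "h holomorphic_on ball 0 1" unfolding h_def
      by (intro holomorphic_on_compose_gen[OF _ holw]) (auto intro: holomorphic_intros)
    have h0: "h 0 = 0" by (simp add: h_def w0)
    have hno: "norm (h z) < 1" if "norm z < 1" for z
    proof -
      have "norm (of_real r0 * z) < r0" using that r0pos by (simp add: norm_mult)
      thus ?thesis using wlt by (simp add: h_def)
    qed
    define \<xi> where "\<xi> = of_real t * z0 / of_real r0"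
    have n\<xi>: "norm \<xi> = t" using r0pos that by (simp add: \<xi>_def norm_mult norm_divide r0_def)
    have "norm (h \<xi>) \<le> norm \<xi>" using Schwarz_Lemma(1)[OF holh h0 hno, of \<xi>] n\<xi> that by simp
    moreover have "h \<xi> = w (of_real t * z0)" using r0pos by (simp add: h_def \<xi>_def)
    ultimately show ?thesis using n\<xi> by simp
  qed
  define Dq where "Dq = deriv q z0"
  have z0U: "z0 \<in> U" using subU r0_def by auto
  have dq: "(q has_field_derivative Dq) (at z0)" unfolding Dq_def
    using hol z0U by (intro holomorphic_derivI[of _ "ball 0 1"]) (auto simp: U_def)
  define D where "D = (Dq * (q z0 + c') - (q z0 - 1) * Dq) / ((q z0 + c') * (q z0 + c'))"
  have dw: "(w has_field_derivative D) (at z0)" unfolding w_def D_def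
    using den[of z0] r0_def by (auto intro!: derivative_eq_intros dq)
  have dH2: "((\<lambda>z. cnj W * w (z0 * exp (\<i> * z))) has_field_derivative (cnj W * (D * (z0 * \<i>)))) (at (of_real 0))"
  proof -
    have "((\<lambda>z. z0 * exp (\<i> * z)) has_field_derivative (z0 * \<i>)) (at 0)"
      by (auto intro!: derivative_eq_intros)
    moreover have "DERIV w (z0 * exp (\<i> * 0)) :> D" using dw by simp
    ultimately show ?thesis by (auto intro!: DERIV_cmult DERIV_chain2[where f=w])
  qed
  have dphi2: "((\<lambda>t. Re (cnj W * w (z0 * exp (\<i> * of_real t)))) has_field_derivative Re (cnj W * (D * (z0 * \<i>)))) (at 0)"
    using has_vector_derivative_real_field[OF dH2] unfolding has_vector_derivative_complex_iff by simp
  have tmax: "Re (cnj W * w (z0 * exp (\<i> * of_real y))) \<le> Re (cnj W * w (z0 * exp (\<i> * of_real 0)))" for y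
  proof -
    have "Re (cnj W * w (z0 * exp (\<i> * of_real y))) \<le> norm (cnj W * w (z0 * exp (\<i> * of_real y)))"
      by (rule complex_Re_le_cmod)
    also have "\<dots> \<le> 1"
    proof -
      have "norm (z0 * exp (\<i> * of_real y)) = r0" by (simp add: norm_mult r0_def)
      hence "norm (w (z0 * exp (\<i> * of_real y))) \<le> 1" using wle by simp
      thus ?thesis using nW by (simp add: norm_mult)
    qed
    also have "1 = Re (cnj W * W)" using WW by simp
    finally show ?thesis by (simp add: W_def)
  qed
  have "Re (cnj W * (D * (z0 * \<i>))) = 0"
  proof (rule DERIV_local_max[OF dphi2, of 1])
    show "\<forall>y. \<bar>0 - y\<bar> < 1 \<longrightarrow> Re (cnj W * w (z0 * exp (\<i> * of_real y))) \<le> Re (cnj W * w (z0 * exp (\<i> * of_real 0)))"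
      using tmax by blast
  qed simp
  hence imk: "Im (cnj W * (D * z0)) = 0" by (simp add: algebra_simps)
  define k where "k = Re (cnj W * (D * z0))"
  have dH1: "((\<lambda>z. cnj W * w (z * z0)) has_field_derivative (cnj W * (D * z0))) (at (of_real 1))"
  proof -
    have "((\<lambda>z. z * z0) has_field_derivative z0) (at 1)"
      by (auto intro!: derivative_eq_intros)
    moreover have "DERIV w (1 * z0) :> D" using dw by simp
    ultimately show ?thesis by (auto intro!: DERIV_cmult DERIV_chain2[where f=w])
  qed
  have dphi1: "((\<lambda>t. Re (cnj W * w (of_real t * z0))) has_field_derivative k) (at 1)"
    using has_vector_derivative_real_field[OF dH1] unfolding has_vector_derivative_complex_iff k_def by simp
  have k1: "k \<ge> 1"
  proof (rule ccontr)
    assume "\<not> k \<ge> 1"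
    hence "k - 1 < 0" by simp
    have dchi: "((\<lambda>t. Re (cnj W * w (of_real t * z0)) - t) has_field_derivative (k - 1)) (at 1)"
      by (intro derivative_intros dphi1)
    obtain d where d: "d > 0" "\<And>h. h > 0 \<Longrightarrow> h < d \<Longrightarrow>
        Re (cnj W * w (of_real 1 * z0)) - 1 < Re (cnj W * w (of_real (1 - h) * z0)) - (1 - h)"
      using DERIV_neg_dec_left[OF dchi \<open>k - 1 < 0\<close>] by blast
    define h where "h = min (d/2) (1/2)"
    have hpos: "h > 0" "h < d" "h \<le> 1/2" using d by (auto simp: h_def)
    have "Re (cnj W * w (of_real 1 * z0)) = 1" using WW by (simp add: W_def)
    hence A: "0 < Re (cnj W * w (of_real (1 - h) * z0)) - (1 - h)" using d(2)[OF hpos(1,2)] by simp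
    have "Re (cnj W * w (of_real (1 - h) * z0)) \<le> norm (cnj W * w (of_real (1 - h) * z0))"
      by (rule complex_Re_le_cmod)
    also have "\<dots> \<le> 1 - h"
    proof -
      have "norm (w (of_real (1 - h) * z0)) \<le> 1 - h" using radial[of "1 - h"] hpos by simp
      thus ?thesis using nW by (simp add: norm_mult)
    qed
    finally show False using A by simp
  qed
  have "cnj W * (D * z0) = of_real k" using imk by (simp add: complex_eq_iff k_def)
  hence "W * cnj W * (D * z0) = W * of_real k" by (simp add: mult.assoc)
  moreover have "W * cnj W = 1" using WW by (simp add: mult.commute)
  ultimately have DW: "D * z0 = of_real k * W" by simp
  have qc: "q z0 + c' \<noteq> 0" using den r0_def by simp
  have b1': "complex_of_real (2 * (1 - \<beta>)) \<noteq> 0" using b1 by simp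
  have c'1: "c' + 1 = complex_of_real (2 * (1 - \<beta>))" by (simp add: c'_def)
  have "z0 * Dq = of_real k * (q z0 - 1) * (q z0 + c') / of_real (2*(1-\<beta>))"
  proof -
    have "D = Dq * (c' + 1) / ((q z0 + c') * (q z0 + c'))" by (simp add: D_def algebra_simps)
    hence "Dq * (c' + 1) * z0 / ((q z0 + c') * (q z0 + c')) = of_real k * ((q z0 - 1) / (q z0 + c'))"
      using DW by (simp add: W_def w_def)
    hence E: "Dq * (c' + 1) * z0 / ((q z0 + c') * (q z0 + c')) = of_real k * ((q z0 - 1) / (q z0 + c'))" .
    have "Dq * (c' + 1) * z0 = (Dq * (c' + 1) * z0 / ((q z0 + c') * (q z0 + c'))) * ((q z0 + c') * (q z0 + c'))"
      using qc by simp
    also have "\<dots> = of_real k * ((q z0 - 1) / (q z0 + c')) * ((q z0 + c') * (q z0 + c'))" using E by simp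
    also have "\<dots> = of_real k * (q z0 - 1) * (q z0 + c')" using qc by simp
    finally have "Dq * (c' + 1) * z0 = of_real k * (q z0 - 1) * (q z0 + c')" .
    hence "Dq * (c' + 1) * z0 = of_real k * (q z0 - 1) * (q z0 + c')" .
    thus ?thesis unfolding c'1 using b1' by (simp add: field_simps)
  qed
  thus ?thesis using \<open>z0 \<noteq> 0\<close> Req0 k1 z0le r1 r0_def unfolding Dq_def c'_def
    by (intro exI[of _ z0]) auto
qed



lemma alg_real:
  fixes B S k g :: real
  assumes "0 \<le> B" "B < 1" "0 \<le> S" "B*B + S > 0" "k \<ge> 1"
    and "(B \<le> 1/2 \<and> g = B/(2*(1-B))) \<or> (B \<ge> 1/2 \<and> g = (1-B)/(2*B))"
  shows "(- k * (S + (1-B)^2) / (2*(1-B))) * B / (B*B + S) \<le> - g"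
proof -
  have e: "(- k * (S + (1-B)^2) / (2*(1-B))) * B / (B*B + S) = - ((k * B * (S + (1-B)^2)) / (2*(1-B)*(B*B + S)))"
  proof -
    have "1 - B \<noteq> 0" "B*B+S \<noteq> 0" using assms by auto
    thus ?thesis by (simp add: divide_divide_eq_left mult_ac)
  qed
  have pos: "2*(1-B)*(B*B+S) > 0" using assms by simp
  have A: "B * (S + (1-B)^2) \<le> k * B * (S + (1-B)^2)"
  proof -
    have "0 \<le> B * (S + (1-B)^2)" using assms by simp
    thus ?thesis using assms(5) by (metis mult.assoc mult.commute mult_le_cancel_right1 mult.left_commute mult_left_mono[of 1 k] mult_1)
  qed
  have "g * (2*(1-B)*(B*B+S)) \<le> k * B * (S + (1-B)^2)"
    using assms(6)
  proof
    assume h: "B \<le> 1/2 \<and> g = B/(2*(1-B))"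
    have g2: "g*(2*(1-B)) = B" using h assms by simp
    have "g * (2*(1-B)*(B*B+S)) = (g*(2*(1-B)))*(B*B+S)" by (simp add: mult.assoc)
    hence "g * (2*(1-B)*(B*B+S)) = B * (B*B+S)" using g2 by simp
    also have "\<dots> \<le> B * (S + (1-B)^2)"
    proof (rule mult_left_mono)
      have "B*B \<le> (1-B)^2" using h assms by (simp add: power2_eq_square algebra_simps)
      thus "B * B + S \<le> S + (1 - B)\<^sup>2" by simp
    qed (use assms in auto)
    finally show ?thesis using A by linarith
  next
    assume h: "B \<ge> 1/2 \<and> g = (1-B)/(2*B)"
    hence Bp: "B > 0" by simp
    hence "g * (2*(1-B)*(B*B+S)) = (1-B)*(1-B)*(B*B+S) / B" using h assms by (simp add: field_simps)
    also have "\<dots> \<le> B * (S + (1-B)^2)"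
    proof -
      have "(1-B)*(1-B) \<le> B*B" using h assms by (simp add: algebra_simps)
      hence "(1-B)*(1-B)*S \<le> B*B*S" using assms by (simp add: mult_right_mono)
      hence "(1-B)*(1-B)*(B*B+S) \<le> B * (B * (S + (1-B)^2))" by (simp add: power2_eq_square algebra_simps)
      thus ?thesis using Bp by (simp add: divide_le_eq mult.commute)
    qed
    finally show ?thesis using A by linarith
  qed
  hence "g \<le> (k * B * (S + (1-B)^2)) / (2*(1-B)*(B*B + S))" using pos by (simp add: le_divide_eq)
  thus ?thesis unfolding e by linarith
qed

lemma alg_complex:
  fixes q0 x :: complex and \<beta> k g :: real
  assumes "Re q0 = \<beta>" "0 \<le> \<beta>" "\<beta> < 1" "q0 \<noteq> 0" "k \<ge> 1"
    and "x = of_real k * (q0 - 1) * (q0 + of_real (1 - 2*\<beta>)) / of_real (2*(1-\<beta>))"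
    and "(\<beta> \<le> 1/2 \<and> g = \<beta>/(2*(1-\<beta>))) \<or> (\<beta> \<ge> 1/2 \<and> g = (1-\<beta>)/(2*\<beta>))"
  shows "Re (x / q0) \<le> - g"
proof -
  define S where "S = (Im q0)^2"
  have q0e: "q0 = Complex \<beta> (Im q0)" using assms(1) by (simp add: complex_eq_iff)
  have xe: "x = of_real (- k * (S + (1-\<beta>)^2) / (2*(1-\<beta>)))"
    unfolding assms(6) S_def using assms(1,3) by (subst q0e, simp add: complex_eq_iff power2_eq_square algebra_simps Complex_eq)
  have n: "(cmod q0)^2 = \<beta>*\<beta> + S" using cmod_power2[of q0] assms(1) by (simp add: S_def power2_eq_square[of \<beta>])
  have "Re (x / q0) = (- k * (S + (1-\<beta>)^2) / (2*(1-\<beta>))) * \<beta> / (\<beta>*\<beta> + S)"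
  proof -
    define r where "r = (- k * (S + (1-\<beta>)^2) / (2*(1-\<beta>)))"
    have xr: "x = of_real r" using xe r_def by simp
    have "Re (x/q0) = r * Re q0 / ((Re q0)^2 + (Im q0)^2)"
      unfolding xr by (simp add: divide_inverse)
    also have "\<dots> = r * \<beta> / (\<beta>*\<beta> + S)"
      using assms(1) by (simp add: S_def power2_eq_square)
    finally show ?thesis by (simp add: r_def)
  qed
  also have "\<dots> \<le> - g"
  proof (rule alg_real)
    have "(cmod q0)^2 > 0" using assms(4) by simp
    thus "\<beta>*\<beta> + S > 0" using n by linarith
    show "0 \<le> S" by (simp add: S_def)
  qed (use assms in auto)
  finally show ?thesis .
qed


lemma series_factor:
  fixes a :: "nat \<Rightarrow> complex" and f :: "complex \<Rightarrow> complex" and p :: nat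
  assumes p: "p \<ge> 1" and sm: "\<And>z. z \<in> ball 0 1 \<Longrightarrow> (\<lambda>k. a k * z ^ k) sums f z"
    and az: "\<And>k. k < p \<Longrightarrow> a k = 0" and ap: "a p = 1"
  shows "\<exists>g. g holomorphic_on ball 0 1 \<and> g 0 = 1 \<and> (\<forall>z\<in>ball 0 1. f z = z^p * g z)"
proof -
  define g where "g z = (\<Sum>n. a (n+p) * z^n)" for z
  have sh: "(\<lambda>n. a (n+p) * z^(n+p)) sums f z" if "z \<in> ball 0 1" for z
  proof -
    have "(\<Sum>i<p. a i * z^i) = 0" by (intro sum.neutral) (simp add: az)
    thus ?thesis using sums_split_initial_segment[OF sm[OF that], of p] by simp
  qed
  have sg: "(\<lambda>n. a(n+p) * z^n) sums g z" if "z \<in> ball 0 1" for z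
  proof -
    have "summable (\<lambda>n. a(n+p) * z^n)"
    proof (cases "z = 0")
      case True
      then show ?thesis using powser_sums_zero[of "\<lambda>n. a (n+p)"] sums_summable by auto
    next
      case False
      have "(\<lambda>n. a (n+p) * z^(n+p) * inverse (z^p)) sums (f z * inverse (z^p))"
        by (rule sums_mult2[OF sh[OF that]])
      moreover have "(\<lambda>n. a (n+p) * z^(n+p) * inverse (z^p)) = (\<lambda>n. a(n+p) * z^n)"
        using False by (simp add: power_add field_simps)
      ultimately show ?thesis using sums_summable by metis
    qed
    thus ?thesis by (simp add: g_def summable_sums)
  qed
  have fg: "\<forall>z\<in>ball 0 1. f z = z^p * g z"
  proof
    fix z :: complex assume z: "z \<in> ball 0 1"
    show "f z = z^p * g z"
    proof (cases "z = 0")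
      case True
      have "(\<lambda>k. a k * 0 ^ k) sums f 0" using sm[of 0] by simp
      hence "a 0 = f 0" by (simp add: powser_sums_zero_iff)
      thus ?thesis using True az[of 0] p by simp
    next
      case False
      have "(\<lambda>n. z^p * (a(n+p) * z^n)) sums (z^p * g z)" by (rule sums_mult[OF sg[OF z]])
      moreover have "(\<lambda>n. z^p * (a(n+p) * z^n)) = (\<lambda>n. a (n+p) * z^(n+p))"
        by (simp add: power_add mult_ac)
      ultimately show ?thesis using sh[OF z] sums_unique2 by metis
    qed
  qed
  have g0: "g 0 = 1"
  proof -
    have "(\<lambda>n. a(n+p) * 0^n) sums g 0" using sg[of 0] by simp
    hence "a (0+p) = g 0" by (simp only: powser_sums_zero_iff)
    thus ?thesis using ap by simp
  qed
  have "g holomorphic_on ball 0 1"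
  proof (subst holomorphic_on_open, simp, intro ballI)
    fix z :: complex assume z: "z \<in> ball 0 1"
    define K where "K = complex_of_real ((1 + norm z)/2)"
    have nK: "norm K = (1 + norm z)/2" unfolding K_def norm_of_real by simp
    have K1: "K \<in> ball 0 1" using z nK by simp
    have zK: "norm z < norm K" using z nK by simp
    have "summable (\<lambda>n. a(n+p) * K^n)" using sg[OF K1] sums_summable by blast
    from termdiffs_strong[OF this zK]
    have "DERIV g z :> (\<Sum>n. diffs (\<lambda>n. a (n+p)) n * z^n)" unfolding g_def[abs_def] .
    thus "\<exists>f'. DERIV g z :> f'" by blast
  qed
  thus ?thesis using g0 fg by blast
qed


theorem corollary3p10:
  fixes p :: nat and lam \<delta> :: real and f :: "complex \<Rightarrow> complex" and a :: "nat \<Rightarrow> complex"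
  assumes "p \<ge> 1"
    and "0 \<le> lam" "lam \<le> 1"
    and "f holomorphic_on ball 0 1"
    and "\<And>z. z \<in> ball 0 1 \<Longrightarrow> (\<lambda>k. a k * z ^ k) sums f z"
    and "\<And>k. k < p \<Longrightarrow> a k = 0" and "a p = 1"
    and "\<And>z. z \<in> ball 0 1 \<Longrightarrow> z \<noteq> 0 \<Longrightarrow> Flam lam f z * deriv (Flam lam f) z \<noteq> 0"
    and "0 \<le> \<delta>" "\<delta> < 1 + lam * (real p - 1)"
    and "\<And>z. z \<in> ball 0 1 \<Longrightarrow> z \<noteq> 0 \<Longrightarrow>
           Re ((z * deriv f z + of_real lam * z^2 * deriv (deriv f) z) /
               ((1 - of_real lam) * f z + of_real lam * z * deriv f z)) > rho1 p lam \<delta>"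
  shows "\<forall>z \<in> ball 0 1. z \<noteq> 0 \<longrightarrow> Re (Flam lam f z / z ^ p) > \<delta>"
proof -
  obtain g where holg: "g holomorphic_on ball 0 1" and g0: "g 0 = 1" and fg: "\<forall>z\<in>ball 0 1. f z = z^p * g z"
    using series_factor[OF assms(1,5,6,7)] by blast
  define B where "B = ball (0::complex) 1"
  have oB: "open B" by (simp add: B_def)
  obtain m where pm: "p = Suc m" using assms(1) by (cases p) auto
  define c where "c = 1 + lam * (real p - 1)"
  have c1: "c \<ge> 1" using assms(1,2) by (simp add: c_def)
  have cpm: "complex_of_real c = 1 + of_real lam * of_nat m" by (simp add: c_def pm)
  define q where "q z = g z + of_real (lam / c) * z * deriv g z" for z
  have holdg: "deriv g holomorphic_on B" using holg by (intro holomorphic_deriv) (auto simp: B_def)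
  have holq: "q holomorphic_on B" unfolding q_def using holg holdg
    by (intro holomorphic_intros) (auto simp: B_def)
  have q0: "q 0 = 1" by (simp add: q_def g0)
  have dg: "(g has_field_derivative deriv g z) (at z)" if "z \<in> B" for z
    using holg that by (intro holomorphic_derivI[of _ B]) (auto simp: B_def)
  have dq: "(q has_field_derivative deriv q z) (at z)" if "z \<in> B" for z
    using holq that oB by (intro holomorphic_derivI[of _ B]) auto
  have df: "deriv f z = of_nat p * z^m * g z + z^p * deriv g z" if "z \<in> B" for z
  proof -
    have "((\<lambda>z. z^p * g z) has_field_derivative (of_nat p * z^(p-1) * g z + z^p * deriv g z)) (at z)"
      using dg[OF that] by (auto intro!: derivative_eq_intros)
    hence "((\<lambda>z. z^p * g z) has_field_derivative (of_nat p * z^m * g z + z^p * deriv g z)) (at z)"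
      using pm by simp
    hence "(f has_field_derivative (of_nat p * z^m * g z + z^p * deriv g z)) (at z)"
      by (rule has_field_derivative_transform_within_open[OF _ oB that]) (use fg B_def in auto)
    thus ?thesis by (rule DERIV_imp_deriv)
  qed
  define F where "F = Flam lam f"
  have Fq: "F z = of_real c * z^p * q z" if "z \<in> B" for z
  proof -
    have "F z = (1 - of_real lam) * (z^p * g z) + of_real lam * z * (of_nat p * z^m * g z + z^p * deriv g z)"
      unfolding F_def Flam_def using df[OF that] fg that B_def by simp
    also have "\<dots> = z^p * ((1 + of_real lam * of_nat m) * g z + of_real lam * z * deriv g z)"
      by (simp add: pm algebra_simps)
    also have "\<dots> = of_real c * z^p * q z"
      using c1 unfolding q_def cpm[symmetric] by (simp add: algebra_simps)
    finally show ?thesis .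
  qed
  have dF: "deriv F z = of_real c * (of_nat p * z^m * q z + z^p * deriv q z)" if "z \<in> B" for z
  proof -
    have "((\<lambda>z. of_real c * z^p * q z) has_field_derivative (of_real c * (of_nat p * z^(p-1) * q z + z^p * deriv q z))) (at z)"
      using dq[OF that] by (auto intro!: derivative_eq_intros simp: algebra_simps)
    hence "((\<lambda>z. of_real c * z^p * q z) has_field_derivative (of_real c * (of_nat p * z^m * q z + z^p * deriv q z))) (at z)"
      using pm by simp
    hence "(F has_field_derivative (of_real c * (of_nat p * z^m * q z + z^p * deriv q z))) (at z)"
      by (rule has_field_derivative_transform_within_open[OF _ oB that]) (use Fq in auto)
    thus ?thesis by (rule DERIV_imp_deriv)
  qed
  have holdf: "deriv f holomorphic_on B" using assms(4) by (intro holomorphic_deriv) (auto simp: B_def)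
  have dF2: "deriv F z = deriv f z + of_real lam * z * deriv (deriv f) z" if "z \<in> B" for z
  proof -
    have d1: "(f has_field_derivative deriv f z) (at z)"
      using assms(4) that oB by (intro holomorphic_derivI[of _ B]) (auto simp: B_def)
    have d2: "(deriv f has_field_derivative deriv (deriv f) z) (at z)"
      using holdf that oB by (intro holomorphic_derivI[of _ B]) auto
    have e1: "((\<lambda>z. (1 - of_real lam) * f z) has_field_derivative (1 - of_real lam) * deriv f z) (at z)"
      by (rule DERIV_cmult[OF d1])
    have e2: "((\<lambda>z. of_real lam * z * deriv f z) has_field_derivative
        (of_real lam * z * deriv (deriv f) z + (of_real lam * 1) * deriv f z)) (at z)"
      by (rule DERIV_mult'[OF DERIV_cmult[OF DERIV_ident] d2])
    have "(F has_field_derivative ((1 - of_real lam) * deriv f z + (of_real lam * z * deriv (deriv f) z + (of_real lam * 1) * deriv f z))) (at z)"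
      unfolding F_def Flam_def[abs_def] by (rule DERIV_add[OF e1 e2])
    from DERIV_imp_deriv[OF this] show ?thesis by (simp add: algebra_simps)
  qed
  have hyp: "Re (z * deriv F z / F z) > rho1 p lam \<delta>" if "z \<in> B" "z \<noteq> 0" for z
  proof -
    have "z * deriv F z = z * deriv f z + of_real lam * z^2 * deriv (deriv f) z"
      using dF2[OF that(1)] by (simp add: algebra_simps power2_eq_square)
    thus ?thesis using assms(11)[of z] that by (simp add: F_def Flam_def B_def)
  qed
  have Fne: "F z \<noteq> 0" if "z \<in> B" "z \<noteq> 0" for z using assms(8)[of z] that by (simp add: F_def B_def)
  have qne: "q z \<noteq> 0" if "z \<in> B" "z \<noteq> 0" for z using Fne[OF that] Fq[OF that(1)] by auto
  have key: "z * deriv F z / F z = of_nat p + z * deriv q z / q z" if "z \<in> B" "z \<noteq> 0" for z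
  proof -
    have "c \<noteq> 0" using c1 by simp
    thus ?thesis unfolding dF[OF that(1)] Fq[OF that(1)] using qne[OF that] that(2) pm
      by (simp add: field_simps)
  qed
  show ?thesis
  proof (rule ccontr)
    assume "\<not> ?thesis"
    then obtain z1 where z1: "z1 \<in> B" "z1 \<noteq> 0" "Re (F z1 / z1^p) \<le> \<delta>"
      by (auto simp: B_def F_def not_less)
    define \<beta> where "\<beta> = \<delta> / c"
    have "F z1 / z1^p = of_real c * q z1" using Fq[OF z1(1)] z1(2) by simp
    hence "c * Re (q z1) \<le> \<delta>" using z1(3) by simp
    hence qz1: "Re (q z1) \<le> \<beta>" using c1 by (simp add: \<beta>_def field_simps mult.commute)
    have b0: "0 \<le> \<beta>" using assms(9) c1 by (simp add: \<beta>_def)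
    have b1: "\<beta> < 1" using assms(10) c1 by (simp add: \<beta>_def c_def)
    obtain z0 k where z0: "norm z0 < 1" "z0 \<noteq> 0" "Re (q z0) = \<beta>" and k: "k \<ge> 1"
      and x: "z0 * deriv q z0 = of_real k * (q z0 - 1) * (q z0 + of_real (1 - 2*\<beta>)) / of_real (2*(1-\<beta>))"
      using jack[OF holq[unfolded B_def] q0 b0 b1, of z1] z1 qz1 by (auto simp: B_def)
    have z0B: "z0 \<in> B" using z0 by (simp add: B_def)
    define \<gamma> where "\<gamma> = real p - rho1 p lam \<delta>"
    have dc: "\<delta> = \<beta> * c" using c1 by (simp add: \<beta>_def)
    have gam: "(\<beta> \<le> 1/2 \<and> \<gamma> = \<beta>/(2*(1-\<beta>))) \<or> (\<beta> \<ge> 1/2 \<and> \<gamma> = (1-\<beta>)/(2*\<beta>))"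
    proof (cases "\<delta> \<le> c / 2")
      case True
      hence "\<beta> \<le> 1/2" using c1 by (simp add: \<beta>_def field_simps)
      moreover have "\<gamma> = \<delta> / (2 * (c - \<delta>))" using True by (simp add: \<gamma>_def rho1_def c_def Let_def)
      moreover have "\<delta> / (2 * (c - \<delta>)) = \<beta>/(2*(1-\<beta>))" unfolding dc using c1 b1
        by (simp add: field_simps)
      ultimately show ?thesis by simp
    next
      case False
      hence "\<beta> \<ge> 1/2" using c1 by (simp add: \<beta>_def field_simps)
      moreover have "\<gamma> = (c - \<delta>) / (2 * \<delta>)" using False by (simp add: \<gamma>_def rho1_def c_def Let_def)
      moreover have "(c - \<delta>) / (2 * \<delta>) = (1-\<beta>)/(2*\<beta>)"
      proof -
        have bnz: "\<beta> \<noteq> 0" using False c1 by (auto simp: \<beta>_def)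
        show ?thesis unfolding dc using c1 b1 bnz by (simp add: field_simps)
      qed
      ultimately show ?thesis by simp
    qed
    have le: "Re (z0 * deriv q z0 / q z0) \<le> - \<gamma>"
      by (rule alg_complex[OF z0(3) b0 b1 qne[OF z0B z0(2)] k x gam])
    have "Re (z0 * deriv F z0 / F z0) > rho1 p lam \<delta>" by (rule hyp[OF z0B z0(2)])
    hence "real p + Re (z0 * deriv q z0 / q z0) > rho1 p lam \<delta>" using key[OF z0B z0(2)] by simp
    thus False using le by (simp add: \<gamma>_def)
  qed
qed

end
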